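(* For all integers $a,b,l\ge0$, $$\sum_{\tau\in P(a,b)}(-1)^{|\hat\tau|}\,s_{(\tau+l-b)\cup(\hat\tau+l)}=\binom{a+b}{a}\,s_{(l^{a+b})}\quad\text{in }\operatorname{Sym}_{a+b},$$ where $\tau+l-b=(\tau_1+l-b,\dots,\tau_a+l-b)\in\mathbb Z^a$ and $\hat\tau+l=(\hat\tau_1+l,\dots,\hat\tau_b+l)\in\mathbb Z^b$. Equivalently, in terms of the wedge product, $\sum_{\tau\in P(a,b)}(-1)^{|\hat\tau|}\wedge_{a,b}(s_{l^a}s_\tau, s_{\hat\tau}s_{l^b})=\binom{a+b}{a}s_{(l^{a+b})}$.
   Context: $\operatorname{Sym}_k=\mathbb Z[x_1,\dots,x_k]^{S_k}$. $P(a,b)$ is the set of partitions $\lambda=(\lambda_1\ge\dots\ge\lambda_a\ge0)$ with at most $a$ parts and $\lambda_1\le b$; $|\lambda|=\sum\lambda_i$. For $\lambda\in P(a,b)$, the complementary partition is $\lambda^c=(b-\lambda_a,\dots,b-\lambda_1)$, the conjugate $\lambda^t$ has $\lambda^t_j=\#\{i:\lambda_i\ge j\}$, and $\hat\lambda=(\lambda^c)^t\in P(b,a)$ (regarded as a length-$b$ sequence padded with zeros). $(l^k)$ denotes $(l,\dots,l)$ ($k$ entries). For $\mu\in\mathbb Z^k$ with $\mu_j\ge j-k$, $s_\mu=\det(x_i^{\mu_j+k-j})_{1\le i,j\le k}/\det(x_i^{k-j})_{1\le i,j\le k}$; for $\lambda\in\mathbb Z^a,\mu\in\mathbb Z^b$,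 $\lambda\cup\mu=(\lambda_1,\dots,\lambda_a,\mu_1,\dots,\mu_b)$. The wedge product is $\wedge_{a,b}(s_\lambda,s_\mu)=s_{(\lambda-b)\cup\mu}$ for $\lambda\in P(a)$, $\mu\in P(b)$, extended bilinearly. *)

theory Defs
  imports Main "Jordan_Normal_Form.Determinant"
begin

definition partitions_box :: "nat \<Rightarrow> nat \<Rightarrow> nat list set" where
  "partitions_box a b = {ls. length ls = a \<and> sorted_wrt (\<ge>) ls \<and> (\<forall>v\<in>set ls. v \<le> b)}"

definition part_size :: "nat list \<Rightarrow> nat" where
  "part_size ls = sum_list ls"

definition part_compl :: "nat \<Rightarrow> nat list \<Rightarrow> nat list" where
  "part_compl b ls = rev (map (\<lambda>v. b - v) ls)"

definition part_conj :: "nat \<Rightarrow> nat list \<Rightarrow> nat list" where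
  "part_conj m ls = map (\<lambda>j. length (filter (\<lambda>v. v \<ge> j) ls)) [1..<m+1]"

definition part_hat :: "nat \<Rightarrow> nat list \<Rightarrow> nat list" where
  "part_hat b ls = part_conj b (part_compl b ls)"

text \<open>Schur function s_mu in k variables x_0,...,x_(k-1), as the ratio of alternants
  det(x_i^(mu_j+k-j)) / det(x_i^(k-j)) (1-based j; here 0-based, so exponent mu_j + k - 1 - j).
  Exponents are nonnegative whenever mu_j >= j - k, the paper's standing hypothesis.\<close>
definition schur :: "nat \<Rightarrow> int list \<Rightarrow> (nat \<Rightarrow> real) \<Rightarrow> real" where
  "schur k mu x =
     det (mat k k (\<lambda>(i,j). x i ^ nat (mu ! j + int k - 1 - int j)))
   / det (mat k k (\<lambda>(i,j). x i ^ (k - 1 - j)))"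

end

theory Submission
  imports Defs
begin

fun ninv :: "nat list \<Rightarrow> nat" where
  "ninv [] = 0"
| "ninv (x # xs) = length (filter (\<lambda>y. x < y) xs) + ninv xs"

lemma ninv_append:
  "ninv (xs @ ys) = ninv xs + ninv ys + sum_list (map (\<lambda>x. length (filter (\<lambda>y. x < y) ys)) xs)"
  by (induction xs) auto

lemma ninv_swap:
  assumes "u < v"
  shows "ninv (xs @ u # v # ys) = Suc (ninv (xs @ v # u # ys))"
proof -
  have e: "map (\<lambda>x. length (filter (\<lambda>y. x < y) (u#v#ys))) xs
         = map (\<lambda>x. length (filter (\<lambda>y. x < y) (v#u#ys))) xs"
    by (auto intro: map_cong)
  have "ninv (u#v#ys) = Suc (ninv (v#u#ys))" using assms by simp
  then show ?thesis by (simp only: ninv_append e)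
qed

lemma ninv_zero_sorted: "ninv e = 0 \<Longrightarrow> distinct e \<Longrightarrow> sorted_wrt (>) e"
proof (induction e)
  case (Cons x xs)
  have f: "\<forall>y\<in>set xs. \<not> x < y" using Cons.prems(1) by (simp add: filter_empty_conv)
  have nx: "x \<notin> set xs" using Cons.prems(2) by simp
  have "\<forall>y\<in>set xs. y < x"
  proof
    fix y assume y: "y \<in> set xs"
    then have "\<not> x < y" "y \<noteq> x" using f nx by auto
    then show "y < x" by simp
  qed
  with Cons show ?case by auto
qed simp

lemma sorted_ninv_zero: "sorted_wrt (>) e \<Longrightarrow> ninv e = 0"
  by (induction e) (auto simp: filter_empty_conv)

lemma desc_eq:
  assumes "sorted_wrt (>) e" "set e = {..<length e}"
  shows "e = rev [0..<length e]"
proof -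
  have "rev e = [0..<length e]"
  proof (rule strict_sorted_equal)
    show "sorted_wrt (<) (rev e)" using assms(1) by (simp add: sorted_wrt_rev)
    show "sorted_wrt (<) [0..<length e]" by (rule sorted_wrt_upt)
    show "set (rev e) = set [0..<length e]" using assms(2) by (simp add: atLeast0LessThan)
  qed
  then show ?thesis by (simp add: rev_swap)
qed

lemma det_perm_cols:
  fixes f :: "nat \<Rightarrow> nat \<Rightarrow> 'a :: comm_ring_1"
  assumes "distinct e" "set e = {..<length e}"
  shows "det (mat (length e) (length e) (\<lambda>(i,j). f i (e!j)))
       = (-1)^ninv e * det (mat (length e) (length e) (\<lambda>(i,j). f i (length e - 1 - j)))"
  using assms
proof (induction "ninv e" arbitrary: e)
  case 0
  define n where "n = length e"
  have eq: "e = rev [0..<n]" unfolding n_def using ninv_zero_sorted desc_eq 0 by metis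
  have "\<And>j. j < length e \<Longrightarrow> e ! j = length e - 1 - j"
  proof -
    fix j assume "j < length e"
    then show "e ! j = length e - 1 - j" unfolding eq by (simp add: rev_nth)
  qed
  then have "mat (length e) (length e) (\<lambda>(i,j). f i (e!j))
       = mat (length e) (length e) (\<lambda>(i,j). f i (length e - 1 - j))"
    by (intro eq_matI) auto
  then show ?case using 0 by simp
next
  case (Suc m)
  let ?n = "length e"
  have ns: "\<not> sorted_wrt (>) e"
  proof
    assume "sorted_wrt (>) e"
    then have "ninv e = 0" by (rule sorted_ninv_zero)
    with Suc(2) show False by simp
  qed
  have tr: "transp ((>) :: nat \<Rightarrow> nat \<Rightarrow> bool)" by (auto simp: transp_def)
  from ns obtain k where k: "Suc k < ?n" "\<not> e ! k > e ! Suc k"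
    unfolding sorted_wrt_iff_nth_Suc_transp[OF tr] by blast
  have ne: "e ! k \<noteq> e ! Suc k" by (subst nth_eq_iff_index_eq[OF Suc(3)]) (use k(1) in simp_all)
  with k(2) have lt: "e ! k < e ! Suc k" by linarith
  define e' where "e' = take k e @ e ! Suc k # e ! k # drop (Suc (Suc k)) e"
  have ee: "e = take k e @ e ! k # e ! Suc k # drop (Suc (Suc k)) e"
    using k(1) by (simp add: Cons_nth_drop_Suc)
  have inv: "ninv e = Suc (ninv e')"
    unfolding e'_def by (subst ee) (rule ninv_swap[OF lt])
  have len: "length e' = ?n" unfolding e'_def using k by simp
  have "distinct e' \<and> set e' = set e"
  proof -
    have "distinct (take k e @ e ! k # e ! Suc k # drop (Suc (Suc k)) e)"
      using Suc(3) ee by metis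
    then have d: "distinct e'" unfolding e'_def by auto
    have "set (take k e @ e ! k # e ! Suc k # drop (Suc (Suc k)) e) = set e"
      using ee by metis
    then have "set e' = set e" unfolding e'_def by auto
    with d show ?thesis by simp
  qed
  then have IH: "det (mat ?n ?n (\<lambda>(i,j). f i (e'!j)))
       = (-1)^m * det (mat ?n ?n (\<lambda>(i,j). f i (?n - 1 - j)))"
    using Suc(1)[of e'] Suc(2) inv len Suc(4) by auto
  have nth': "\<And>j. j < ?n \<Longrightarrow> e' ! j = (if j = k then e ! Suc k else if j = Suc k then e ! k else e ! j)"
  proof -
    fix j assume j: "j < ?n"
    have "e' = e[k := e ! Suc k, Suc k := e ! k]"
      unfolding e'_def using k(1)
      by (subst (3) ee) (simp add: list_update_append)
    then show "e' ! j = (if j = k then e ! Suc k else if j = Suc k then e ! k else e ! j)"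
      using j k by auto
  qed
  have sw: "mat ?n ?n (\<lambda>(i,j). f i (e!j)) = swapcols k (Suc k) (mat ?n ?n (\<lambda>(i,j). f i (e'!j)))"
    by (rule eq_matI) (auto simp: mat_swapcols_def nth' k)
  have "det (mat ?n ?n (\<lambda>(i,j). f i (e!j))) = - det (mat ?n ?n (\<lambda>(i,j). f i (e'!j)))"
    unfolding sw by (rule det_swapcols) (use k in auto)
  then show ?case using IH by (simp add: Suc(2)[symmetric])
qed


fun sc :: "nat list \<Rightarrow> nat list" where
  "sc [] = []"
| "sc (x # xs) = (x + length xs) # sc xs"

lemma length_sc[simp]: "length (sc xs) = length xs"
  by (induction xs) auto

lemma sc_snoc0: "sc (xs @ [0]) = map Suc (sc xs) @ [0]"
  by (induction xs) auto

lemma sc_mapSuc: "sc (map Suc xs) = map Suc (sc xs)"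
  by (induction xs) auto

lemma sc_rep0: "sc (replicate n 0) = rev [0..<n]"
  by (induction n) auto

lemma nth_sc: "j < length xs \<Longrightarrow> sc xs ! j = xs ! j + (length xs - 1 - j)"
proof (induction xs arbitrary: j)
  case (Cons x xs)
  then show ?case by (cases j) auto
qed simp

lemma ninv_mapSuc: "ninv (map Suc xs) = ninv xs"
  by (induction xs) (auto simp: filter_map o_def)

lemma ninv_snoc0: "ninv (xs @ [0]) = ninv xs"
  by (simp add: ninv_append)

lemma ninv_mid0: "ninv (map Suc p @ 0 # map Suc q) = ninv (p @ q) + length q"
proof -
  have a: "ninv (0 # map Suc q) = length q + ninv q"
    by (simp add: ninv_mapSuc filter_map o_def)
  have b: "map (\<lambda>x. length (filter (\<lambda>y. x < y) (0 # map Suc q))) (map Suc p)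
      = map (\<lambda>x. length (filter (\<lambda>y. x < y) q)) p"
    by (simp add: filter_map o_def)
  show ?thesis
    by (simp only: ninv_append[of "map Suc p"] ninv_append[of p q] a b ninv_mapSuc)
qed

lemma length_hat[simp]: "length (part_hat b t) = b"
  by (simp add: part_hat_def part_conj_def)

lemma hat_nil: "part_hat b [] = replicate b 0"
  by (simp add: part_hat_def part_conj_def part_compl_def map_replicate_const)

lemma hat_zero: "part_hat 0 t = []"
  by (simp add: part_hat_def part_conj_def)

lemma hat_snoc0:
  assumes "\<forall>v\<in>set t. v \<le> b"
  shows "part_hat b (t @ [0]) = map Suc (part_hat b t)"
proof -
  have c: "part_compl b (t @ [0]) = b # part_compl b t"
    by (simp add: part_compl_def)
  show ?thesis unfolding part_hat_def c part_conj_def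
    by (auto intro!: map_cong)
qed

lemma hat_mapSuc:
  assumes "\<forall>v\<in>set t. v \<le> b"
  shows "part_hat (Suc b) (map Suc t) = part_hat b t @ [0]"
proof -
  have c: "part_compl (Suc b) (map Suc t) = part_compl b t"
    by (simp add: part_compl_def o_def)
  have z: "length (filter (\<lambda>v. Suc b \<le> v) (part_compl b t)) = 0"
    by (auto simp: part_compl_def filter_empty_conv)
  show ?thesis unfolding part_hat_def c part_conj_def
    using z by simp
qed


lemma pb_zero_left: "partitions_box 0 b = {[]}"
  by (auto simp: partitions_box_def)

lemma pb_zero_right: "partitions_box a 0 = {replicate a 0}"
proof (intro equalityI subsetI)
  fix t assume "t \<in> partitions_box a 0"
  then have "length t = a" "\<forall>v\<in>set t. v = 0" by (auto simp: partitions_box_def)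
  then show "t \<in> {replicate a 0}" by (simp add: replicate_eqI)
next
  fix t :: "nat list" assume "t \<in> {replicate a 0}"
  then show "t \<in> partitions_box a 0"
    by (auto simp: partitions_box_def sorted_wrt_iff_nth_less)
qed

lemma pb_step:
  "partitions_box (Suc a) (Suc b) =
     (\<lambda>t. t @ [0]) ` partitions_box a (Suc b) \<union> map Suc ` partitions_box (Suc a) b"
proof (intro equalityI subsetI)
  fix \<tau> assume \<tau>: "\<tau> \<in> partitions_box (Suc a) (Suc b)"
  then have len: "length \<tau> = Suc a" and srt: "sorted_wrt (\<ge>) \<tau>" and le: "\<forall>v\<in>set \<tau>. v \<le> Suc b"
    by (auto simp: partitions_box_def)
  have ne: "\<tau> \<noteq> []" using len by auto
  have dec: "\<tau> = butlast \<tau> @ [last \<tau>]" using ne by simp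
  have srt2: "sorted_wrt (\<ge>) (butlast \<tau> @ [last \<tau>])" using srt dec by simp
  then have sb: "sorted_wrt (\<ge>) (butlast \<tau>)" and gl: "\<forall>v\<in>set (butlast \<tau>). last \<tau> \<le> v"
    by (simp_all add: sorted_wrt_append)
  show "\<tau> \<in> (\<lambda>t. t @ [0]) ` partitions_box a (Suc b) \<union> map Suc ` partitions_box (Suc a) b"
  proof (cases "last \<tau> = 0")
    case True
    have "butlast \<tau> \<in> partitions_box a (Suc b)"
      using sb le len by (auto simp: partitions_box_def dest: in_set_butlastD)
    moreover have "\<tau> = butlast \<tau> @ [0]" using dec True by simp
    ultimately show ?thesis by blast
  next
    case False
    have ge1: "\<forall>v\<in>set \<tau>. 1 \<le> v"
    proof
      fix v assume v: "v \<in> set \<tau>"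
      then have "v \<in> set (butlast \<tau> @ [last \<tau>])" using dec by simp
      then have "v \<in> set (butlast \<tau>) \<or> v = last \<tau>" by auto
      then show "1 \<le> v" using gl False by fastforce
    qed
    define t where "t = map (\<lambda>v. v - 1) \<tau>"
    have "map Suc t = \<tau>" unfolding t_def map_map by (rule map_idI) (use ge1 in auto)
    moreover have "t \<in> partitions_box (Suc a) b"
    proof -
      have "sorted_wrt (\<ge>) t" unfolding t_def sorted_wrt_map
        by (rule sorted_wrt_mono_rel[OF _ srt]) auto
      then show ?thesis using len le unfolding t_def partitions_box_def by auto
    qed
    ultimately show ?thesis by blast
  qed
next
  fix \<tau> assume "\<tau> \<in> (\<lambda>t. t @ [0]) ` partitions_box a (Suc b) \<union> map Suc ` partitions_box (Suc a) b"
  then show "\<tau> \<in> partitions_box (Suc a) (Suc b)"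
    by (auto simp: partitions_box_def sorted_wrt_append sorted_wrt_map)
qed

lemma pb_induct:
  assumes "\<And>b. P 0 b" "\<And>a. P a 0" "\<And>a b. P a (Suc b) \<Longrightarrow> P (Suc a) b \<Longrightarrow> P (Suc a) (Suc b)"
  shows "P a b"
proof (induction "a+b" arbitrary: a b rule: less_induct)
  case less
  show ?case
  proof (cases a)
    case 0 then show ?thesis using assms(1) by simp
  next
    case sa: (Suc a')
    show ?thesis
    proof (cases b)
      case 0 then show ?thesis using assms(2) by simp
    next
      case sb: (Suc b')
      have "P a' (Suc b')" using less sa sb by simp
      moreover have "P (Suc a') b'" using less sa sb by simp
      ultimately show ?thesis using assms(3) sa sb by simp
    qed
  qed
qed

lemma pb_card: "finite (partitions_box a b) \<and> card (partitions_box a b) = (a+b) choose a"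
proof (induction a b rule: pb_induct)
  case (1 b) then show ?case by (simp add: pb_zero_left)
next
  case (2 a) then show ?case by (simp add: pb_zero_right)
next
  case (3 a b)
  let ?A = "(\<lambda>t. t @ [0]) ` partitions_box a (Suc b)"
  let ?B = "map Suc ` partitions_box (Suc a) b"
  have fA: "finite ?A" and fB: "finite ?B" using 3 by auto
  have dj: "?A \<inter> ?B = {}"
  proof (rule ccontr)
    assume "?A \<inter> ?B \<noteq> {}"
    then obtain s t where "s @ [0] = map Suc t" by blast
    then have "last (s @ [0]) = last (map Suc t)" by simp
    moreover have "t \<noteq> []" using \<open>s @ [0] = map Suc t\<close> by auto
    ultimately show False by (simp add: last_map)
  qed
  have "card ?A = card (partitions_box a (Suc b))" by (rule card_image) (auto simp: inj_on_def)
  moreover have "card ?B = card (partitions_box (Suc a) b)" by (rule card_image) (auto simp: inj_on_def)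
  ultimately have "card (partitions_box (Suc a) (Suc b)) = ((a + Suc b) choose a) + ((Suc a + b) choose (Suc a))"
    unfolding pb_step using card_Un_disjoint[OF fA fB dj] 3 by simp
  then show ?case unfolding pb_step using fA fB by simp
qed

lemma dist1: "distinct (map Suc p @ 0 # map Suc q) \<longleftrightarrow> distinct (p @ q)"
  by (auto simp: distinct_map)
lemma set1: "set (map Suc p @ 0 # map Suc q) = insert 0 (Suc ` set (p @ q))"
  by auto
lemma dist2: "distinct (map Suc p @ map Suc q @ [0]) \<longleftrightarrow> distinct (p @ q)"
  by (auto simp: distinct_map)
lemma set2: "set (map Suc p @ map Suc q @ [0]) = insert 0 (Suc ` set (p @ q))"
  by auto
lemma sum_list_mapSuc: "sum_list (map Suc xs) = sum_list xs + length xs"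
  by (induction xs) auto

lemma exps:
  "\<tau> \<in> partitions_box a b \<Longrightarrow>
    distinct (sc \<tau> @ sc (part_hat b \<tau>)) \<and> set (sc \<tau> @ sc (part_hat b \<tau>)) = {..<a+b}
    \<and> ninv (sc \<tau> @ sc (part_hat b \<tau>)) = sum_list (part_hat b \<tau>)"
proof (induction a b arbitrary: \<tau> rule: pb_induct)
  case (1 b)
  then have t: "\<tau> = []" by (simp add: pb_zero_left)
  have "ninv (rev [0..<b]) = 0" by (rule sorted_ninv_zero) (simp add: sorted_wrt_rev)
  then show ?case unfolding t by (simp add: hat_nil sc_rep0 atLeast0LessThan)
next
  case (2 a)
  then have t: "\<tau> = replicate a 0" by (simp add: pb_zero_right)
  have "ninv (rev [0..<a]) = 0" by (rule sorted_ninv_zero) (simp add: sorted_wrt_rev)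
  then show ?case unfolding t by (simp add: hat_zero sc_rep0 atLeast0LessThan)
next
  case (3 a b)
  from "3"(3) consider (A) t where "t \<in> partitions_box a (Suc b)" "\<tau> = t @ [0]"
    | (B) t where "t \<in> partitions_box (Suc a) b" "\<tau> = map Suc t"
    unfolding pb_step by blast
  then show ?case
  proof cases
    case A
    have le: "\<forall>v\<in>set t. v \<le> Suc b" using A(1) by (simp add: partitions_box_def)
    let ?h = "part_hat (Suc b) t"
    have IH: "distinct (sc t @ sc ?h)" "set (sc t @ sc ?h) = {..<a + Suc b}"
      "ninv (sc t @ sc ?h) = sum_list ?h" using "3"(1)[OF A(1)] by auto
    have E: "sc \<tau> @ sc (part_hat (Suc b) \<tau>) = map Suc (sc t) @ 0 # map Suc (sc ?h)"
      unfolding A(2) hat_snoc0[OF le] sc_snoc0 sc_mapSuc by simp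
    show ?thesis unfolding E dist1 set1 ninv_mid0 unfolding A(2) hat_snoc0[OF le] sum_list_mapSuc
      using IH by (simp add: lessThan_Suc_eq_insert_0)
  next
    case B
    have le: "\<forall>v\<in>set t. v \<le> b" using B(1) by (simp add: partitions_box_def)
    let ?h = "part_hat b t"
    have IH: "distinct (sc t @ sc ?h)" "set (sc t @ sc ?h) = {..<Suc a + b}"
      "ninv (sc t @ sc ?h) = sum_list ?h" using "3"(2)[OF B(1)] by auto
    have E: "sc \<tau> @ sc (part_hat (Suc b) \<tau>) = map Suc (sc t) @ map Suc (sc ?h) @ [0]"
      unfolding B(2) hat_mapSuc[OF le] sc_snoc0 sc_mapSuc by simp
    have E2: "map Suc (sc t) @ map Suc (sc ?h) @ [0] = map Suc (sc t @ sc ?h) @ [0]" by simp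
    show ?thesis unfolding E dist2 set2 unfolding B(2) hat_mapSuc[OF le]
      using IH by (simp only: E2 ninv_snoc0 ninv_mapSuc) (simp add: lessThan_Suc_eq_insert_0)
  qed
qed


lemma exps_nat:
  fixes n j l :: nat and t :: nat
  assumes "j < n"
  shows "nat (int l + int n - 1 - int j) = n - 1 - j + l"
  using assms by linarith

theorem mainTheorem13:
  fixes a b l :: nat and x :: "nat \<Rightarrow> real"
  assumes "inj_on x {..<a+b}"
  shows "(\<Sum>\<tau>\<in>partitions_box a b.
            (-1) ^ part_size (part_hat b \<tau>) *
            schur (a+b) (map (\<lambda>t. int t + int l - int b) \<tau> @
                         map (\<lambda>t. int t + int l) (part_hat b \<tau>)) x)
         = real ((a+b) choose a) * schur (a+b) (replicate (a+b) (int l)) x"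
proof -
  let ?n = "a+b"
  let ?S = "schur ?n (replicate ?n (int l)) x"
  let ?V = "det (mat ?n ?n (\<lambda>(i,j). x i ^ (?n - 1 - j)))"
  have base: "mat ?n ?n (\<lambda>(i,j). x i ^ nat (replicate ?n (int l) ! j + int ?n - 1 - int j))
      = mat ?n ?n (\<lambda>(i,j). x i ^ (?n - 1 - j + l))"
  proof -
    have e: "nat (int l + (int a + int b) - 1 - int j) = a + b + l - Suc j" if "j < a + b" for j
      using that by linarith
    show ?thesis by (rule eq_matI) (auto simp: e)
  qed
  have S: "?S = det (mat ?n ?n (\<lambda>(i,j). x i ^ (?n - 1 - j + l))) / ?V"
    unfolding schur_def base by simp
  have hterm: "(-1) ^ part_size (part_hat b \<tau>) *
            schur ?n (map (\<lambda>t. int t + int l - int b) \<tau> @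
                         map (\<lambda>t. int t + int l) (part_hat b \<tau>)) x = ?S"
    if \<tau>: "\<tau> \<in> partitions_box a b" for \<tau>
  proof -
    define h where "h = part_hat b \<tau>"
    define E where "E = sc \<tau> @ sc h"
    have lt: "length \<tau> = a" using \<tau> by (simp add: partitions_box_def)
    have lh: "length h = b" unfolding h_def by simp
    have lE: "length E = ?n" unfolding E_def using lt lh by simp
    from exps[OF \<tau>] have dE: "distinct E" "set E = {..<length E}" "ninv E = sum_list h"
      unfolding E_def h_def lE by (auto simp: lt)
    have M: "mat ?n ?n (\<lambda>(i,j). x i ^ nat ((map (\<lambda>t. int t + int l - int b) \<tau> @
                         map (\<lambda>t. int t + int l) h) ! j + int ?n - 1 - int j))
           = mat (length E) (length E) (\<lambda>(i,j). x i ^ (E ! j + l))"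
    proof (rule eq_matI)
      fix i j assume i: "i < dim_row (mat (length E) (length E) (\<lambda>(i,j). x i ^ (E ! j + l)))"
        and j: "j < dim_col (mat (length E) (length E) (\<lambda>(i,j). x i ^ (E ! j + l)))"
      have j': "j < ?n" using j lE by simp
      have "nat ((map (\<lambda>t. int t + int l - int b) \<tau> @ map (\<lambda>t. int t + int l) h) ! j
                 + int ?n - 1 - int j) = E ! j + l"
      proof (cases "j < a")
        case True
        have "E ! j = sc \<tau> ! j" unfolding E_def using True lt by (simp add: nth_append)
        also have "\<dots> = \<tau> ! j + (a - 1 - j)" using True lt by (simp add: nth_sc)
        finally show ?thesis using True lt by (simp add: nth_append)
      next
        case False
        have jb: "j - a < b" using j' False by simp
        have "E ! j = sc h ! (j - a)" unfolding E_def using False lt by (simp add: nth_append)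
        also have "\<dots> = h ! (j - a) + (b - 1 - (j - a))" using jb lh by (simp add: nth_sc)
        finally show ?thesis using False lt jb lh j' by (simp add: nth_append)
      qed
      then show "mat ?n ?n (\<lambda>(i,j). x i ^ nat ((map (\<lambda>t. int t + int l - int b) \<tau> @
                         map (\<lambda>t. int t + int l) h) ! j + int ?n - 1 - int j)) $$ (i, j)
           = mat (length E) (length E) (\<lambda>(i,j). x i ^ (E ! j + l)) $$ (i, j)"
        using i j lE by simp
    qed (use lE in simp_all)
    have D: "det (mat (length E) (length E) (\<lambda>(i,j). x i ^ (E ! j + l)))
        = (-1)^ninv E * det (mat (length E) (length E) (\<lambda>(i,j). x i ^ (length E - 1 - j + l)))"
      using det_perm_cols[OF dE(1) dE(2), of "\<lambda>i k. x i ^ (k + l)"] by simp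
    have "schur ?n (map (\<lambda>t. int t + int l - int b) \<tau> @ map (\<lambda>t. int t + int l) h) x
        = (-1)^ninv E * ?S"
      unfolding schur_def M unfolding D unfolding lE base by simp
    then show ?thesis unfolding h_def[symmetric] part_size_def dE(3)
      by (simp flip: power_add add: power_mult[symmetric] mult_2[symmetric])
  qed
  have "(\<Sum>\<tau>\<in>partitions_box a b.
            (-1) ^ part_size (part_hat b \<tau>) *
            schur (a+b) (map (\<lambda>t. int t + int l - int b) \<tau> @
                         map (\<lambda>t. int t + int l) (part_hat b \<tau>)) x)
      = (\<Sum>\<tau>\<in>partitions_box a b. ?S)"
    by (rule sum.cong[OF refl]) (rule hterm)
  also have "\<dots> = real (card (partitions_box a b)) * ?S" by simp
  finally show ?thesis using pb_card by simp
qed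

end
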